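(* Fix any integer $d\geq 3$, any prime power $q$, any group $\Gamma$, and a set $S\subseteq[d-1]$ with $|S|\geq 2$. Let $s$ be any face of $\mathcal{B}^{d,S}_q$ of co-dimension at least $3$. Then the $1$-cohomology of the link $\mathcal{B}^{d,S}_{q,s}$ with respect to $\Gamma$ is trivial; that is, every $f\in C^1(\mathcal{B}^{d,S}_{q,s},\Gamma)$ with $\delta f\equiv\mathrm{id}$ is of the form $f=\delta g$ for some $g:\mathcal{B}^{d,S}_{q,s}(0)\to\Gamma$.
   Context: For $S=\{s_1<\dots<s_m\}\subseteq[d-1]$, $\mathcal{B}^{d,S}_q$ is the simplicial complex whose vertices are the subspaces of $\mathbb{F}_q^d$ with dimension in $S$ and whose top faces are the chains $W_1\subset\cdots\subset W_m$ with $\dim W_i=s_i$ (faces are subsets of top faces). The co-dimension of a face $s$ is $|S|-|s|$, and $\mathcal{B}^{d,S}_{q,s}=\{t\setminus s: t\supseteq s\}$ is its link. $C^1(X,\Gamma)$ is the set of functions $f$ on ordered edges $(u,v)$ of $X$ with $f(u,v)=f(v,u)^{-1}$; $\delta f(u,v,w)=f(u,v)f(v,w)f(w,u)$ on triangles; $\delta g(u,v)=g(u)g(v)^{-1}$ for $g$ on vertices. *)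

theory Defs
  imports "HOL-Analysis.Analysis"
begin

text \<open>The field F_q is modelled by a finite field type 'k (CARD('k) = q, necessarily a prime
power, and every prime power arises this way); F_q^d is 'k^'n with CARD('n) = d.\<close>

definition top_face :: "nat set \<Rightarrow> ('k::field ^ 'n) set set \<Rightarrow> bool" where
  "top_face S F \<longleftrightarrow>
     (\<forall>W\<in>F. vec.subspace W) \<and> bij_betw vec.dim F S \<and>
     (\<forall>W1\<in>F. \<forall>W2\<in>F. W1 \<subseteq> W2 \<or> W2 \<subseteq> W1)"

definition face :: "nat set \<Rightarrow> ('k::field ^ 'n) set set \<Rightarrow> bool" where
  "face S t \<longleftrightarrow> (\<exists>F. top_face S F \<and> t \<subseteq> F)"

definition link :: "nat set \<Rightarrow> ('k::field ^ 'n) set set \<Rightarrow> ('k ^ 'n) set set set" where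
  "link S s = {t - s | t. face S t \<and> s \<subseteq> t}"

definition link_vertices :: "nat set \<Rightarrow> ('k::field ^ 'n) set set \<Rightarrow> ('k ^ 'n) set set" where
  "link_vertices S s = {v. {v} \<in> link S s}"

definition link_edge :: "nat set \<Rightarrow> ('k::field ^ 'n) set set \<Rightarrow> ('k ^ 'n) set \<Rightarrow> ('k ^ 'n) set \<Rightarrow> bool" where
  "link_edge S s u v \<longleftrightarrow> u \<noteq> v \<and> {u, v} \<in> link S s"

definition link_triangle :: "nat set \<Rightarrow> ('k::field ^ 'n) set set \<Rightarrow> ('k ^ 'n) set \<Rightarrow> ('k ^ 'n) set \<Rightarrow> ('k ^ 'n) set \<Rightarrow> bool" where
  "link_triangle S s u v w \<longleftrightarrow> u \<noteq> v \<and> v \<noteq> w \<and> u \<noteq> w \<and> {u, v, w} \<in> link S s"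

text \<open>1-cochains with values in a (not necessarily abelian) group, written additively
(class group_add): f(u,v) = f(v,u)^{-1}.\<close>
definition cochain1 :: "nat set \<Rightarrow> ('k::field ^ 'n) set set \<Rightarrow> (('k ^ 'n) set \<Rightarrow> ('k ^ 'n) set \<Rightarrow> 'g::group_add) \<Rightarrow> bool" where
  "cochain1 S s f \<longleftrightarrow> (\<forall>u v. link_edge S s u v \<longrightarrow> f u v = - f v u)"

definition cocycle1 :: "nat set \<Rightarrow> ('k::field ^ 'n) set set \<Rightarrow> (('k ^ 'n) set \<Rightarrow> ('k ^ 'n) set \<Rightarrow> 'g::group_add) \<Rightarrow> bool" where
  "cocycle1 S s f \<longleftrightarrow> (\<forall>u v w. link_triangle S s u v w \<longrightarrow> f u v + f v w + f w u = 0)"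

definition coboundary1 :: "nat set \<Rightarrow> ('k::field ^ 'n) set set \<Rightarrow> (('k ^ 'n) set \<Rightarrow> ('k ^ 'n) set \<Rightarrow> 'g::group_add) \<Rightarrow> bool" where
  "coboundary1 S s f \<longleftrightarrow> (\<exists>g. \<forall>u v. link_edge S s u v \<longrightarrow> f u v = g u + - g v)"

end

theory Submission
  imports Defs
begin

lemma sub_eq:
  fixes U W :: "('a::field ^'n) set"
  shows "vec.subspace U \<Longrightarrow> vec.subspace W \<Longrightarrow> U \<subseteq> W \<Longrightarrow> vec.dim W \<le> vec.dim U \<Longrightarrow> U = W"
  by (rule vec.subspace_dim_equal)

lemma dim_ins:
  fixes U :: "('a::field ^'n) set"
  shows "vec.subspace U \<Longrightarrow> x \<notin> U \<Longrightarrow> vec.dim (vec.span (insert x U)) = vec.dim U + 1"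
proof -
  assume a: "vec.subspace U" "x \<notin> U"
  have e: "vec.span U = U" using vec.span_eq_iff a(1) by blast
  have "x \<notin> vec.span U" unfolding e by (rule a(2))
  then show ?thesis by (simp add: vec.dim_insert)
qed

lemma comp_lt:
  fixes U W :: "('a::field ^'n) set"
  assumes a: "U \<subseteq> W \<or> W \<subseteq> U" "vec.dim U < vec.dim W"
  shows "U \<subseteq> W"
proof (rule ccontr)
  assume "\<not> U \<subseteq> W"
  then have "W \<subseteq> U" using a by blast
  then have "vec.dim W \<le> vec.dim U" by (rule vec.dim_subset)
  then show False using a by simp
qed

lemma comp_eq:
  fixes U W :: "('a::field ^'n) set"
  shows "vec.subspace U \<Longrightarrow> vec.subspace W \<Longrightarrow> U \<subseteq> W \<or> W \<subseteq> U \<Longrightarrow> vec.dim U = vec.dim W \<Longrightarrow> U = W"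
  using sub_eq by (metis order_refl)

lemma proper_dim:
  fixes U W :: "('a::field ^'n) set"
  shows "vec.subspace U \<Longrightarrow> vec.subspace W \<Longrightarrow> U \<subseteq> W \<Longrightarrow> U \<noteq> W \<Longrightarrow> vec.dim U < vec.dim W"
  using sub_eq vec.dim_subset by (metis le_neq_implies_less)

lemma exist_mid:
  fixes U W :: "('a::field ^'n) set"
  assumes "vec.subspace U" "vec.subspace W" "U \<subseteq> W" "vec.dim U \<le> m" "m \<le> vec.dim W"
  shows "\<exists>X. vec.subspace X \<and> U \<subseteq> X \<and> X \<subseteq> W \<and> vec.dim X = m"
  using assms
proof (induction "m - vec.dim U" arbitrary: U)
  case 0
  then show ?case by (intro exI[of _ U]) auto
next
  case (Suc k)
  then have "U \<noteq> W" by auto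
  then obtain x where x: "x \<in> W" "x \<notin> U" using Suc by auto
  let ?U = "vec.span (insert x U)"
  have d: "vec.dim ?U = vec.dim U + 1" using dim_ins Suc x by blast
  have "?U \<subseteq> W" using Suc x by (meson insert_subsetI vec.span_minimal)
  moreover have "U \<subseteq> ?U" by (meson subset_insertI vec.span_superset subset_trans)
  moreover have "vec.subspace ?U" by simp
  moreover have "k = m - vec.dim ?U" using Suc.hyps(2) d by simp
  moreover have "vec.dim ?U \<le> m" using Suc.hyps(2) d by simp
  ultimately obtain X where "vec.subspace X \<and> ?U \<subseteq> X \<and> X \<subseteq> W \<and> vec.dim X = m"
    using Suc.hyps(1)[of ?U] Suc.prems by blast
  then show ?case using \<open>U \<subseteq> ?U\<close> by blast
qed

lemma dim_univ: "vec.dim (UNIV :: ('a::field ^'n) set) = CARD('n)"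
  by (simp add: card_cart_basis)

lemma hyp_dim:
  fixes W H x :: "_"
  assumes "vec.subspace (W :: ('a::field ^'n) set)" "vec.subspace H" "W \<subseteq> vec.span (insert x H)" "\<not> W \<subseteq> H"
  shows "vec.dim W \<le> vec.dim (W \<inter> H) + 1"
proof -
  obtain w0 where w0: "w0 \<in> W" "w0 \<notin> H" using assms by auto
  obtain k0 where k0: "w0 - k0 *s x \<in> H" using assms w0 vec.span_breakdown_eq vec.span_eq_iff by blast
  have k0nz: "k0 \<noteq> 0" using k0 w0 by auto
  have "W \<subseteq> vec.span (insert w0 (W \<inter> H))"
  proof
    fix w assume w: "w \<in> W"
    obtain k where k: "w - k *s x \<in> H" using assms w vec.span_breakdown_eq vec.span_eq_iff by blast
    define c where "c = k / k0"
    have eq: "w - c *s w0 = (w - k *s x) - c *s (w0 - k0 *s x)"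
      using k0nz by (simp add: c_def vec_eq_iff field_simps)
    have "w - c *s w0 \<in> H" unfolding eq using k k0 assms(2) vec.subspace_diff vec.subspace_scale by blast
    moreover have "w - c *s w0 \<in> W" using w w0 assms(1) vec.subspace_diff vec.subspace_scale by blast
    ultimately have "w - c *s w0 \<in> vec.span (W \<inter> H)" by (simp add: vec.span_base)
    then show "w \<in> vec.span (insert w0 (W \<inter> H))" using vec.span_breakdown_eq by blast
  qed
  then have "vec.dim W \<le> vec.dim (insert w0 (W \<inter> H))"
    by (metis vec.dim_span vec.dim_subset)
  moreover have "vec.dim (insert w0 (W \<inter> H)) \<le> vec.dim (W \<inter> H) + 1"
    by (simp add: vec.dim_insert)
  ultimately show ?thesis by linarith
qed

definition adj :: "'a set \<Rightarrow> 'a set \<Rightarrow> bool" where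
  "adj u v \<longleftrightarrow> u \<noteq> v \<and> (u \<subseteq> v \<or> v \<subseteq> u)"

definition AS :: "('a set \<Rightarrow> 'a set \<Rightarrow> 'g::group_add) \<Rightarrow> 'a set set \<Rightarrow> bool" where
  "AS f X \<longleftrightarrow> (\<forall>u\<in>X. \<forall>v\<in>X. adj u v \<longrightarrow> f u v = - f v u)"

definition CC :: "('a set \<Rightarrow> 'a set \<Rightarrow> 'g::group_add) \<Rightarrow> 'a set set \<Rightarrow> bool" where
  "CC f X \<longleftrightarrow> (\<forall>u\<in>X. \<forall>v\<in>X. \<forall>w\<in>X. adj u v \<longrightarrow> adj v w \<longrightarrow> adj u w \<longrightarrow> f u v + f v w + f w u = 0)"

definition cob :: "('a set \<Rightarrow> 'a set \<Rightarrow> 'g::group_add) \<Rightarrow> 'a set set \<Rightarrow> bool" where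
  "cob f X \<longleftrightarrow> (\<exists>g. \<forall>u\<in>X. \<forall>v\<in>X. adj u v \<longrightarrow> f u v = g u + - g v)"

definition rel :: "'a set set \<Rightarrow> 'a set \<Rightarrow> 'a set \<Rightarrow> bool" where
  "rel X a b \<longleftrightarrow> a \<in> X \<and> b \<in> X \<and> adj a b"

definition conn :: "'a set set \<Rightarrow> bool" where
  "conn X \<longleftrightarrow> (\<forall>u\<in>X. \<forall>v\<in>X. (rel X)\<^sup>*\<^sup>* u v)"

lemma adj_sym: "adj u v \<Longrightarrow> adj v u" unfolding adj_def by auto

lemma AS_mono: "AS f X \<Longrightarrow> Y \<subseteq> X \<Longrightarrow> AS f Y" unfolding AS_def by blast
lemma CC_mono: "CC f X \<Longrightarrow> Y \<subseteq> X \<Longrightarrow> CC f Y" unfolding CC_def by blast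

lemma tri:
  assumes "AS f X" "CC f X" "u \<in> X" "v \<in> X" "w \<in> X" "adj u v" "adj v w" "adj u w"
  shows "f u v = f u w + f w v"
proof -
  have "f u v + (f v w + f w u) = 0" using assms unfolding CC_def by (simp add: add.assoc)
  then have "f u v = - (f v w + f w u)" by (simp add: eq_neg_iff_add_eq_0)
  also have "\<dots> = - f w u + - f v w" by (simp add: minus_add)
  also have "- f w u = f u w" using assms unfolding AS_def by (metis adj_sym minus_minus)
  also have "- f v w = f w v" using assms unfolding AS_def by (metis adj_sym minus_minus)
  finally show ?thesis .
qed

lemma cone:
  assumes "AS f X" "CC f X" "c \<in> X" "\<forall>x\<in>X. x \<noteq> c \<longrightarrow> adj x c"
  shows "cob f X"
proof -
  define g where "g x = (if x = c then 0 else f x c)" for x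
  have "\<forall>u\<in>X. \<forall>v\<in>X. adj u v \<longrightarrow> f u v = g u + - g v"
  proof (intro ballI impI)
    fix u v assume uv: "u \<in> X" "v \<in> X" "adj u v"
    show "f u v = g u + - g v"
    proof (cases "u = c")
      case True
      then have vc: "v \<noteq> c" using uv unfolding adj_def by auto
      then have "adj v c" using assms uv by blast
      then have "f c v = - f v c" using assms(1,3) uv(2) adj_sym unfolding AS_def by blast
      then show ?thesis using True vc unfolding g_def by simp
    next
      case False
      note uc = False
      show ?thesis
      proof (cases "v = c")
        case True then show ?thesis using uc unfolding g_def by simp
      next
        case False
        have ac: "adj u c" "adj v c" using assms uv False uc by auto
        have "f u v = f u c + f c v"
          using tri[OF assms(1,2) uv(1,2) assms(3) uv(3) ac(2) ac(1)] .
        moreover have "f c v = - f v c" using assms(1) uv(2) assms(3) adj_sym[OF ac(2)] unfolding AS_def by blast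
        ultimately show ?thesis using False uc unfolding g_def by simp
      qed
    qed
  qed
  then show ?thesis unfolding cob_def by blast
qed

lemma join:
  assumes AS: "AS f (X \<union> Y)" and CC: "CC f (X \<union> Y)" and disj: "X \<inter> Y = {}"
    and x0: "x0 \<in> X" and cY: "conn Y" and y0: "y0 \<in> Y" and XY: "\<forall>x\<in>X. \<forall>y\<in>Y. adj x y"
  shows "cob f (X \<union> Y)"
proof -
  have as: "f a b = - f b a" if "a \<in> X \<union> Y" "b \<in> X \<union> Y" "adj a b" for a b
    using AS that unfolding AS_def by blast
  have tr: "f u v = f u w + f w v" if "u \<in> X \<union> Y" "v \<in> X \<union> Y" "w \<in> X \<union> Y" "adj u v" "adj v w" "adj u w" for u v w
    using tri[OF AS CC] that by blast
  have key: "f x y = f x y0 + f y0 x0 + f x0 y" if x: "x \<in> X" and y: "y \<in> Y" for x y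
  proof -
    have "(rel Y)\<^sup>*\<^sup>* y0 y" using cY y0 y unfolding conn_def by blast
    then show ?thesis
    proof (induction rule: rtranclp_induct)
      case base
      have "f y0 x0 = - f x0 y0" using as x0 y0 XY adj_sym by blast
      then show ?case by (simp add: add.assoc)
    next
      case (step b c)
      then have bc: "b \<in> Y" "c \<in> Y" "adj b c" unfolding rel_def by auto
      have "f x c = f x b + f b c" using tr[of x c b] x bc XY adj_sym by blast
      moreover have "f x0 c = f x0 b + f b c" using tr[of x0 c b] x0 bc XY adj_sym by blast
      ultimately show ?case using step.IH by (simp add: add.assoc)
    qed
  qed
  define g where "g z = (if z \<in> Y then f z x0 else f z y0 + f y0 x0)" for z
  have gY: "- g z = f x0 z" if z: "z \<in> Y" for z
  proof -
    have "adj x0 z" using XY x0 z by blast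
    then have "f x0 z = - f z x0" using as[of x0 z] x0 z by blast
    then show ?thesis using z unfolding g_def by simp
  qed
  have main: "f u v = g u + - g v" if u: "u \<in> X \<union> Y" and v: "v \<in> X \<union> Y" and uv: "adj u v" for u v
  proof -
    consider "u \<in> Y" "v \<in> Y" | "u \<in> X" "v \<in> X" | "u \<in> X" "v \<in> Y" | "u \<in> Y" "v \<in> X" using u v by blast
    then show ?thesis
    proof cases
      case 1
      have "f u v = f u x0 + f x0 v" using tr[of u v x0] 1 x0 XY uv adj_sym by blast
      then show ?thesis using 1 gY unfolding g_def by simp
    next
      case 2
      have nY: "u \<notin> Y" "v \<notin> Y" using 2 disj by auto
      have "f u v = f u y0 + f y0 v" using tr[of u v y0] 2 y0 XY uv by blast
      moreover have "f y0 v = - f v y0" using as 2 y0 XY adj_sym by blast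
      moreover have "g u + - g v = f u y0 + - f v y0" using nY unfolding g_def
        by (simp add: minus_add add.assoc diff_conv_add_uminus del: add_uminus_conv_diff)
      ultimately show ?thesis by simp
    next
      case 3
      have nY: "u \<notin> Y" using 3 disj by auto
      show ?thesis using key[OF 3] nY gY[OF 3(2)] unfolding g_def by (simp add: add.assoc)
    next
      case 4
      have nY: "v \<notin> Y" using 4 disj by auto
      have "f u v = - f v u" using as u v uv by blast
      also have "f v u = f v y0 + f y0 x0 + f x0 u" using key 4 by blast
      finally have e1: "f u v = - (f v y0 + f y0 x0 + f x0 u)" .
      have "adj x0 u" using XY x0 4 by blast
      then have "f x0 u = - f u x0" using as x0 4 by blast
      then have e2: "- f x0 u = f u x0" by simp
      have "f u v = - f x0 u + (- f y0 x0 + - f v y0)" using e1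
        by (simp add: minus_add add.assoc diff_conv_add_uminus del: add_uminus_conv_diff)
      moreover have "g u + - g v = f u x0 + (- f y0 x0 + - f v y0)" using nY 4 unfolding g_def
        by (simp add: minus_add add.assoc diff_conv_add_uminus del: add_uminus_conv_diff)
      ultimately show ?thesis using e2 by simp
    qed
  qed
  then show ?thesis unfolding cob_def by blast
qed

lemma glue:
  assumes AS: "AS f (X \<union> Y)" and CC: "CC f (X \<union> Y)" and disj: "X \<inter> Y = {}"
    and ind: "\<forall>y\<in>Y. \<forall>y'\<in>Y. \<not> adj y y'"
    and cn: "\<forall>y\<in>Y. conn {x\<in>X. adj x y}"
    and cX: "cob f X"
  shows "cob f (X \<union> Y)"
proof -
  have as: "f a b = - f b a" if "a \<in> X \<union> Y" "b \<in> X \<union> Y" "adj a b" for a b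
    using AS that unfolding AS_def by blast
  have tr: "f u v = f u w + f w v" if "u \<in> X \<union> Y" "v \<in> X \<union> Y" "w \<in> X \<union> Y" "adj u v" "adj v w" "adj u w" for u v w
    using tri[OF AS CC] that by blast
  obtain g where g: "\<forall>u\<in>X. \<forall>v\<in>X. adj u v \<longrightarrow> f u v = g u + - g v" using cX unfolding cob_def by blast
  define h where "h y = (if \<exists>u\<in>X. adj u y then (- f (SOME u. u \<in> X \<and> adj u y) y + g (SOME u. u \<in> X \<and> adj u y)) else 0)" for y
  have claim: "f u y = g u + - h y" if y: "y \<in> Y" and u: "u \<in> X" and uy: "adj u y" for u y
  proof -
    define u0 where "u0 = (SOME u. u \<in> X \<and> adj u y)"
    have u0: "u0 \<in> X" "adj u0 y" unfolding u0_def using someI[of "\<lambda>u. u \<in> X \<and> adj u y" u] u uy by auto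
    have hy: "- h y = - g u0 + f u0 y" unfolding h_def u0_def[symmetric] using u uy by (auto simp: minus_add)
    have "(rel {x\<in>X. adj x y})\<^sup>*\<^sup>* u0 u" using cn y u0 u uy unfolding conn_def by blast
    then have "f u y = g u + - g u0 + f u0 y"
    proof (induction rule: rtranclp_induct)
      case base then show ?case by (simp add: add.assoc)
    next
      case (step b c)
      then have bc: "b \<in> X" "c \<in> X" "adj b c" "adj b y" "adj c y" unfolding rel_def by auto
      have e1: "f c y = f c b + f b y" using tr[of c y b] bc y adj_sym by blast
      have e2: "f c b = g c + - g b" using g bc adj_sym by blast
      have "f c y = (g c + - g b) + (g b + - g u0 + f u0 y)" using e1 e2 step.IH by metis
      also have "\<dots> = g c + - g u0 + f u0 y" by (simp only: add.assoc minus_add_cancel)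
      finally show ?case .
    qed
    then show ?thesis using hy by (simp add: add.assoc diff_conv_add_uminus del: add_uminus_conv_diff)
  qed
  define g' where "g' z = (if z \<in> Y then h z else g z)" for z
  have "f u v = g' u + - g' v" if u: "u \<in> X \<union> Y" and v: "v \<in> X \<union> Y" and uv: "adj u v" for u v
  proof -
    consider "u \<in> Y" "v \<in> Y" | "u \<in> X" "v \<in> X" | "u \<in> X" "v \<in> Y" | "u \<in> Y" "v \<in> X" using u v by blast
    then show ?thesis
    proof cases
      case 1 then show ?thesis using ind uv by blast
    next
      case 2 then show ?thesis using disj g uv unfolding g'_def by auto
    next
      case 3 then show ?thesis using disj claim uv unfolding g'_def by auto
    next
      case 4
      have "f u v = - f v u" using as u v uv by blast
      also have "f v u = g v + - h u" using claim 4 uv adj_sym by blast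
      finally show ?thesis using 4 disj unfolding g'_def by (auto simp: minus_add)
    qed
  qed
  then show ?thesis unfolding cob_def by blast
qed

lemma conn_join:
  assumes "X \<noteq> {}" "Y \<noteq> {}" "\<forall>x\<in>X. \<forall>y\<in>Y. adj x y"
  shows "conn (X \<union> Y)"
  unfolding conn_def
proof (intro ballI)
  fix u v assume u: "u \<in> X \<union> Y" and v: "v \<in> X \<union> Y"
  obtain x y where xy: "x \<in> X" "y \<in> Y" using assms by blast
  let ?R = "rel (X \<union> Y)"
  have e: "?R\<^sup>*\<^sup>* a b" if "a \<in> X" "b \<in> Y" for a b
  proof -
    have "?R a b" using assms that unfolding rel_def by auto
    then show ?thesis by (rule r_into_rtranclp)
  qed
  have e': "?R\<^sup>*\<^sup>* b a" if "a \<in> X" "b \<in> Y" for a b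
  proof -
    have "adj a b" using assms that by blast
    then have "?R b a" using that adj_sym unfolding rel_def by auto
    then show ?thesis by (rule r_into_rtranclp)
  qed
  consider "u \<in> X" "v \<in> X" | "u \<in> X" "v \<in> Y" | "u \<in> Y" "v \<in> X" | "u \<in> Y" "v \<in> Y" using u v by blast
  then show "?R\<^sup>*\<^sup>* u v"
  proof cases
    case 1 then show ?thesis using rtranclp_trans[OF e[of u y] e'[of v y]] xy by blast
  next
    case 2 then show ?thesis using e by blast
  next
    case 3 then show ?thesis using e' by blast
  next
    case 4 then show ?thesis using rtranclp_trans[OF e'[of x u] e[of x v]] xy by blast
  qed
qed

lemma conn_cone:
  assumes "c \<in> X" "\<forall>x\<in>X. x \<noteq> c \<longrightarrow> adj x c"
  shows "conn X"
proof -
  have tc: "(rel X)\<^sup>*\<^sup>* u c \<and> (rel X)\<^sup>*\<^sup>* c u" if u: "u \<in> X" for u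
  proof (cases "u = c")
    case True then show ?thesis by simp
  next
    case False
    then have "adj u c" using assms u by blast
    then have "rel X u c" "rel X c u" using assms u adj_sym unfolding rel_def by auto
    then show ?thesis by (simp add: r_into_rtranclp)
  qed
  show ?thesis unfolding conn_def
  proof (intro ballI)
    fix u v assume "u \<in> X" "v \<in> X"
    then show "(rel X)\<^sup>*\<^sup>* u v" using tc rtranclp_trans[of "rel X" u c v] by blast
  qed
qed

lemma conn_hub:
  assumes "Z \<subseteq> X" "\<forall>a\<in>Z. \<forall>b\<in>Z. (rel X)\<^sup>*\<^sup>* a b" "\<forall>x\<in>X. x \<in> Z \<or> (\<exists>z\<in>Z. adj x z)"
  shows "conn X"
proof -
  have tz: "\<exists>z\<in>Z. (rel X)\<^sup>*\<^sup>* x z \<and> (rel X)\<^sup>*\<^sup>* z x" if "x \<in> X" for x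
  proof (cases "x \<in> Z")
    case True then show ?thesis by (intro bexI[of _ x]) auto
  next
    case False
    have "x \<in> Z \<or> (\<exists>z\<in>Z. adj x z)" using bspec[OF assms(3) that] .
    then obtain z where z: "z \<in> Z" "adj x z" using False by blast
    moreover have "z \<in> X" using assms(1) z by blast
    ultimately have "rel X x z" "rel X z x" using that adj_sym unfolding rel_def by auto
    then have "(rel X)\<^sup>*\<^sup>* x z \<and> (rel X)\<^sup>*\<^sup>* z x" by (simp add: r_into_rtranclp)
    then show ?thesis using z by blast
  qed
  show ?thesis unfolding conn_def
  proof (intro ballI)
    fix u v assume "u \<in> X" "v \<in> X"
    then obtain a b where ab: "a \<in> Z" "b \<in> Z" "(rel X)\<^sup>*\<^sup>* u a" "(rel X)\<^sup>*\<^sup>* b v" using tz by blast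
    then have "(rel X)\<^sup>*\<^sup>* a b" using assms(2) by blast
    then show "(rel X)\<^sup>*\<^sup>* u v" using ab rtranclp_trans by metis
  qed
qed

definition IV :: "('a::field ^'n) set \<Rightarrow> ('a ^'n) set \<Rightarrow> nat set \<Rightarrow> ('a ^'n) set set" where
  "IV A B E = {W. vec.subspace W \<and> A \<subseteq> W \<and> W \<subseteq> B \<and> vec.dim W \<in> E}"

lemma exch:
  fixes A B :: "('a::field ^'n) set"
  assumes A: "vec.subspace A" and B: "vec.subspace B" and AB: "A \<subseteq> B"
    and aE: "a \<in> E" and e2E: "e2 \<in> E" and ae2: "a < e2" and e2B: "e2 \<le> vec.dim B"
    and P: "P \<in> IV A B E" "vec.dim P = a" and P': "P' \<in> IV A B E" "vec.dim P' = a"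
  shows "(rel (IV A B E))\<^sup>*\<^sup>* P P'"
  using P
proof (induction "a - vec.dim (P \<inter> P')" arbitrary: P rule: less_induct)
  case less
  note P = less.prems
  have sP: "vec.subspace P" "A \<subseteq> P" "P \<subseteq> B" using P unfolding IV_def by auto
  have sP': "vec.subspace P'" "A \<subseteq> P'" "P' \<subseteq> B" using P' unfolding IV_def by auto
  show ?case
  proof (cases "P = P'")
    case True then show ?thesis by simp
  next
    case False
    have nPP': "\<not> P' \<subseteq> P" using comp_eq[OF sP(1) sP'(1)] P P' False by auto
    then obtain x where x: "x \<in> P'" "x \<notin> P" by auto
    define I where "I = P \<inter> P'"
    have sI: "vec.subspace I" unfolding I_def using sP sP' vec.subspace_inter by blast
    have IP: "I \<subseteq> P" "I \<noteq> P" unfolding I_def using comp_eq[OF sP(1) sP'(1)] P P' False by auto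
    have dI: "vec.dim I < a" using proper_dim[OF sI sP(1) IP] P by simp
    obtain Q where Q: "vec.subspace Q" "I \<subseteq> Q" "Q \<subseteq> P" "vec.dim Q = a - 1"
    proof -
      have "vec.dim I \<le> a - 1" "a - 1 \<le> vec.dim P" using dI P by auto
      then show ?thesis using exist_mid[OF sI sP(1) IP(1), of "a - 1"] that by blast
    qed
    define P1 where "P1 = vec.span (insert x Q)"
    have xQ: "x \<notin> Q" using x Q by auto
    have dP1: "vec.dim P1 = a" unfolding P1_def using dim_ins[OF Q(1) xQ] Q dI by simp
    have QP1: "Q \<subseteq> P1" "x \<in> P1" unfolding P1_def by (auto intro: vec.span_base)
    have sP1: "vec.subspace P1" unfolding P1_def by simp
    have P1B: "P1 \<subseteq> B" unfolding P1_def using Q sP x sP' B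
      by (meson insert_subset subset_trans vec.span_minimal)
    have AI: "A \<subseteq> I" unfolding I_def using sP sP' by auto
    have P1IV: "P1 \<in> IV A B E" unfolding IV_def using sP1 P1B dP1 aE AI Q QP1 by auto
    have i1: "insert x I \<subseteq> P1 \<inter> P'" using QP1 Q(2) x(1) unfolding I_def by auto
    have i2: "vec.subspace (P1 \<inter> P')" using sP1 sP'(1) vec.subspace_inter by blast
    have h1: "vec.span (insert x I) \<subseteq> P1 \<inter> P'" using vec.span_minimal[OF i1 i2] .
    have h2: "vec.dim (vec.span (insert x I)) = vec.dim I + 1"
      using dim_ins[OF sI] x unfolding I_def by auto
    have "vec.dim I + 1 \<le> vec.dim (P1 \<inter> P')" using vec.dim_subset[OF h1] h2 by simp
    then have lt: "a - vec.dim (P1 \<inter> P') < a - vec.dim (P \<inter> P')" using dI unfolding I_def by simp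
    have r1: "(rel (IV A B E))\<^sup>*\<^sup>* P1 P'" using less.hyps[OF lt P1IV dP1] .
    define J where "J = vec.span (insert x P)"
    have dJ: "vec.dim J = a + 1" unfolding J_def using dim_ins[OF sP(1) x(2)] P by simp
    have JB: "J \<subseteq> B" unfolding J_def using sP x sP' B
      by (meson insert_subset subset_trans vec.span_minimal)
    obtain L where L: "vec.subspace L" "J \<subseteq> L" "L \<subseteq> B" "vec.dim L = e2"
      using exist_mid[of J B e2] dJ JB B ae2 e2B unfolding J_def by auto
    have PJ: "P \<subseteq> J" "x \<in> J" unfolding J_def by (auto intro: vec.span_base)
    have LIV: "L \<in> IV A B E" unfolding IV_def using L PJ sP e2E by auto
    have P1L: "P1 \<subseteq> L" unfolding P1_def using L PJ Q
      by (meson insert_subset subset_trans vec.span_minimal)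
    have "adj P L" unfolding adj_def using L PJ P ae2 by auto
    then have r2: "rel (IV A B E) P L" unfolding rel_def using P LIV by auto
    have "adj L P1" unfolding adj_def using P1L L dP1 ae2 by auto
    then have r3: "rel (IV A B E) L P1" unfolding rel_def using P1IV LIV by auto
    show ?thesis using r1 r2 r3 by (meson converse_rtranclp_into_rtranclp)
  qed
qed

lemma IC:
  fixes A B :: "('a::field ^'n) set"
  assumes A: "vec.subspace A" and B: "vec.subspace B" and AB: "A \<subseteq> B"
    and cE: "2 \<le> card E" and bd: "\<forall>e\<in>E. vec.dim A < e \<and> e < vec.dim B"
  shows "conn (IV A B E)"
proof -
  have fE: "finite E" "E \<noteq> {}" using cE by (auto intro: card_ge_0_finite)
  define a where "a = Min E"
  have aE: "a \<in> E" unfolding a_def using fE by simp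
  have "E \<noteq> {a}" using cE by auto
  then obtain e2 where e2: "e2 \<in> E" "e2 \<noteq> a" using aE by blast
  have "a \<le> e2" unfolding a_def using e2 fE by simp
  then have ae2: "a < e2" using e2 by simp
  have e2B: "e2 \<le> vec.dim B" using bd e2 by fastforce
  define Z where "Z = {P \<in> IV A B E. vec.dim P = a}"
  show ?thesis
  proof (rule conn_hub[of Z])
    show "Z \<subseteq> IV A B E" unfolding Z_def by auto
    show "\<forall>p\<in>Z. \<forall>q\<in>Z. (rel (IV A B E))\<^sup>*\<^sup>* p q"
    proof (intro ballI)
      fix p q assume "p \<in> Z" "q \<in> Z"
      then show "(rel (IV A B E))\<^sup>*\<^sup>* p q"
        using exch[OF A B AB aE e2(1) ae2 e2B] unfolding Z_def by auto
    qed
    show "\<forall>x\<in>IV A B E. x \<in> Z \<or> (\<exists>z\<in>Z. adj x z)"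
    proof
      fix W assume W: "W \<in> IV A B E"
      show "W \<in> Z \<or> (\<exists>z\<in>Z. adj W z)"
      proof (cases "vec.dim W = a")
        case True then show ?thesis using W unfolding Z_def by auto
      next
        case False
        have sW: "vec.subspace W" "A \<subseteq> W" "W \<subseteq> B" "vec.dim W \<in> E" using W unfolding IV_def by auto
        have "a \<le> vec.dim W" unfolding a_def using sW fE by simp
        then have "a < vec.dim W" using False by simp
        moreover have "vec.dim A \<le> a" using bd aE by auto
        ultimately obtain P where P: "vec.subspace P" "A \<subseteq> P" "P \<subseteq> W" "vec.dim P = a"
          using exist_mid[OF A sW(1) sW(2), of a] by auto
        have "P \<in> Z" unfolding Z_def IV_def using P sW aE by auto
        moreover have "adj W P" unfolding adj_def using P False by auto
        ultimately show ?thesis by blast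
      qed
    qed
  qed
qed

lemma NBR:
  fixes A B H0 :: "('a::field ^'n) set"
  assumes A: "vec.subspace A" and B: "vec.subspace B" and H: "vec.subspace H0"
    and AH: "A \<subseteq> H0" and HB: "H0 \<subseteq> B" and Bsp: "B \<subseteq> vec.span (insert x H0)"
    and cE: "3 \<le> card E" and bd: "\<forall>e\<in>E. vec.dim A < e \<and> e < vec.dim B"
    and W: "W \<in> IV A B E" and nWH: "\<not> W \<subseteq> H0"
  shows "conn {U \<in> {U \<in> IV A B E. U \<subseteq> H0 \<or> Suc (vec.dim W) \<le> vec.dim U}. adj U W}"
proof -
  have fE: "finite E" using cE by (auto intro: card_ge_0_finite)
  have sW: "vec.subspace W" "A \<subseteq> W" "W \<subseteq> B" "vec.dim W \<in> E" using W unfolding IV_def by auto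
  define e where "e = vec.dim W"
  define WH where "WH = W \<inter> H0"
  have sWH: "vec.subspace WH" unfolding WH_def using sW H vec.subspace_inter by blast
  have WHW: "WH \<subseteq> W" "WH \<noteq> W" unfolding WH_def using nWH by auto
  have d1: "vec.dim WH < e" unfolding e_def using proper_dim[OF sWH sW(1) WHW] .
  have d2: "e \<le> vec.dim WH + 1" unfolding e_def WH_def
    using hyp_dim[OF sW(1) H _ nWH] sW(3) Bsp by blast
  have dWH: "vec.dim WH = e - 1" using d1 d2 by simp
  have AWH: "A \<subseteq> WH" unfolding WH_def using sW AH by auto
  define Low where "Low = IV A WH {e'\<in>E. e' < e}"
  define Up where "Up = IV W B {e'\<in>E. e < e'}"
  have Neq: "{U \<in> {U \<in> IV A B E. U \<subseteq> H0 \<or> Suc (vec.dim W) \<le> vec.dim U}. adj U W} = Low \<union> Up"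
  proof (intro equalityI subsetI)
    fix U assume "U \<in> {U \<in> {U \<in> IV A B E. U \<subseteq> H0 \<or> Suc (vec.dim W) \<le> vec.dim U}. adj U W}"
    then have U: "vec.subspace U" "A \<subseteq> U" "U \<subseteq> B" "vec.dim U \<in> E" "U \<subseteq> H0 \<or> Suc e \<le> vec.dim U" "adj U W"
      unfolding IV_def e_def by auto
    show "U \<in> Low \<union> Up"
    proof (cases "e < vec.dim U")
      case True
      then have "\<not> U \<subseteq> W" using vec.dim_subset[of U W] unfolding e_def by auto
      then have "W \<subseteq> U" using U unfolding adj_def by auto
      then show ?thesis unfolding Up_def IV_def using U True sW by auto
    next
      case False
      then have UH: "U \<subseteq> H0" using U by auto
      have "vec.dim U \<noteq> e" using comp_eq[OF U(1) sW(1)] U(6) unfolding adj_def e_def by auto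
      then have lt: "vec.dim U < e" using False by auto
      then have "U \<subseteq> W" using comp_lt[of U W] U(6) unfolding adj_def e_def by auto
      then have "U \<subseteq> WH" unfolding WH_def using UH by auto
      then show ?thesis unfolding Low_def IV_def using U lt by auto
    qed
  next
    fix U assume "U \<in> Low \<union> Up"
    then consider "U \<in> Low" | "U \<in> Up" by blast
    then show "U \<in> {U \<in> {U \<in> IV A B E. U \<subseteq> H0 \<or> Suc (vec.dim W) \<le> vec.dim U}. adj U W}"
    proof cases
      case 1
      then have U: "vec.subspace U" "A \<subseteq> U" "U \<subseteq> WH" "vec.dim U \<in> E" "vec.dim U < e"
        unfolding Low_def IV_def by auto
      have "U \<noteq> W" using U unfolding e_def by auto
      then show ?thesis using U WHW sW unfolding IV_def adj_def WH_def by auto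
    next
      case 2
      then have U: "vec.subspace U" "W \<subseteq> U" "U \<subseteq> B" "vec.dim U \<in> E" "e < vec.dim U"
        unfolding Up_def IV_def by auto
      have "U \<noteq> W" using U unfolding e_def by auto
      then show ?thesis using U sW unfolding IV_def adj_def e_def by auto
    qed
  qed
  have LowNE: "Low \<noteq> {}" if e1: "e1 \<in> E" "e1 < e" for e1
  proof -
    obtain P where "vec.subspace P" "A \<subseteq> P" "P \<subseteq> WH" "vec.dim P = e1"
      using exist_mid[OF A sWH AWH, of e1] bd e1 dWH by fastforce
    then have "P \<in> Low" unfolding Low_def IV_def using e1 by auto
    then show ?thesis by blast
  qed
  have UpNE: "Up \<noteq> {}" if e2: "e2 \<in> E" "e < e2" for e2
  proof -
    obtain P where "vec.subspace P" "W \<subseteq> P" "P \<subseteq> B" "vec.dim P = e2"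
      using exist_mid[OF sW(1) B sW(3), of e2] bd e2 unfolding e_def by fastforce
    then have "P \<in> Up" unfolding Up_def IV_def using e2 by auto
    then show ?thesis by blast
  qed
  have LU: "\<forall>p\<in>Low. \<forall>q\<in>Up. adj p q"
  proof (intro ballI)
    fix p q assume "p \<in> Low" "q \<in> Up"
    then have "p \<subseteq> WH" "vec.dim p < e" "W \<subseteq> q" "e < vec.dim q" unfolding Low_def Up_def IV_def by auto
    then show "adj p q" unfolding adj_def WH_def by auto
  qed
  have conn_LU: "conn (Low \<union> Up)"
  proof (cases "(\<exists>e1\<in>E. e1 < e) \<and> (\<exists>e2\<in>E. e < e2)")
    case True
    then obtain e1 e2 where "e1 \<in> E" "e1 < e" "e2 \<in> E" "e < e2" by blast
    then have "Low \<noteq> {}" "Up \<noteq> {}" using LowNE UpNE by auto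
    then show ?thesis using conn_join[OF _ _ LU] by blast
  next
    case False
    have Ee: "e \<in> E" using sW unfolding e_def by simp
    show ?thesis
    proof (cases "\<exists>e2\<in>E. e < e2")
      case True
      then have noLow: "\<forall>e1\<in>E. \<not> e1 < e" using False by blast
      then have "Low = {}" unfolding Low_def IV_def by auto
      moreover have "conn Up" unfolding Up_def
      proof (rule IC[OF sW(1) B sW(3)])
        have "{e'\<in>E. e < e'} = E - {e}" using noLow by force
        then show "2 \<le> card {e'\<in>E. e < e'}" using cE Ee fE by simp
        show "\<forall>e'\<in>{e'\<in>E. e < e'}. vec.dim W < e' \<and> e' < vec.dim B" using bd unfolding e_def by auto
      qed
      ultimately show ?thesis by simp
    next
      case False
      then have noUp: "\<forall>e2\<in>E. \<not> e < e2" by blast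
      then have "Up = {}" unfolding Up_def IV_def by auto
      moreover have cLow: "2 \<le> card {e'\<in>E. e' < e}"
      proof -
        have "{e'\<in>E. e' < e} = E - {e}" using noUp by force
        then show ?thesis using cE Ee fE by simp
      qed
      moreover have "conn Low"
      proof (cases "e - 1 \<in> E")
        case True
        have "WH \<in> Low" unfolding Low_def IV_def using sWH AWH dWH True d1 by auto
        moreover have "\<forall>p\<in>Low. p \<noteq> WH \<longrightarrow> adj p WH" unfolding Low_def IV_def adj_def by auto
        ultimately show ?thesis unfolding Low_def using conn_cone by blast
      next
        case False
        show ?thesis unfolding Low_def
        proof (rule IC[OF A sWH AWH cLow])
          show "\<forall>e'\<in>{e'\<in>E. e' < e}. vec.dim A < e' \<and> e' < vec.dim WH"
          proof (intro ballI)
            fix e' assume "e' \<in> {e'\<in>E. e' < e}"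
            then have e': "e' \<in> E" "e' < e" by auto
            then have "e' \<noteq> e - 1" using False by auto
            then show "vec.dim A < e' \<and> e' < vec.dim WH" using bd e' dWH by auto
          qed
        qed
      qed
      ultimately show ?thesis by simp
    qed
  qed
  show ?thesis using Neq conn_LU by simp
qed

lemma IH1:
  fixes A B :: "('a::field ^'n) set"
  assumes A: "vec.subspace A" and cE: "3 \<le> card E"
    and B: "vec.subspace B" and AB: "A \<subseteq> B" and bd: "\<forall>e\<in>E. vec.dim A < e \<and> e < vec.dim B"
    and as: "AS f (IV A B E)" and cc: "CC f (IV A B E)"
  shows "cob f (IV A B E)"
  using B AB bd as cc
proof (induction "vec.dim B" arbitrary: B rule: less_induct)
  case less
  note B = less.prems(1) and AB = less.prems(2) and bd = less.prems(3)
    and as = less.prems(4) and cc = less.prems(5)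
  have fE: "finite E" using cE by (auto intro: card_ge_0_finite)
  have nE: "E \<noteq> {}" using cE by auto
  define M where "M = Max E"
  have ME: "M \<in> E" unfolding M_def using fE nE by simp
  have leM: "\<forall>e\<in>E. e \<le> M" unfolding M_def using fE by simp
  have MB: "vec.dim A < M" "M < vec.dim B" using bd ME by auto
  obtain H0 where H0: "vec.subspace H0" "A \<subseteq> H0" "H0 \<subseteq> B" "vec.dim H0 = vec.dim B - 1"
  proof -
    have "vec.dim A \<le> vec.dim B - 1" "vec.dim B - 1 \<le> vec.dim B" using MB by auto
    then show ?thesis using exist_mid[OF A B AB, of "vec.dim B - 1"] that by blast
  qed
  have "H0 \<noteq> B" using H0 MB by auto
  then obtain x where x: "x \<in> B" "x \<notin> H0" using H0 by auto
  define S' where "S' = vec.span (insert x H0)"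
  have S'B: "S' \<subseteq> B" unfolding S'_def using x H0 B by (meson insert_subset vec.span_minimal)
  have dS': "vec.dim S' = vec.dim B" unfolding S'_def using dim_ins[OF H0(1) x(2)] H0 MB by simp
  have "S' = B" using sub_eq[of S' B] S'B dS' B unfolding S'_def by simp
  then have Bsp: "B \<subseteq> vec.span (insert x H0)" unfolding S'_def by simp
  define V where "V = IV A B E"
  define X where "X e = {U \<in> V. U \<subseteq> H0 \<or> e \<le> vec.dim U}" for e
  have XV: "X e \<subseteq> V" for e unfolding X_def by auto
  have base: "cob f (X (vec.dim B))"
  proof -
    have "X (vec.dim B) = IV A H0 E"
    proof (intro equalityI subsetI)
      fix U assume "U \<in> X (vec.dim B)"
      then have "U \<in> V" "U \<subseteq> H0 \<or> vec.dim B \<le> vec.dim U" unfolding X_def by auto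
      moreover have "vec.dim U < vec.dim B" using \<open>U \<in> V\<close> bd unfolding V_def IV_def by auto
      ultimately show "U \<in> IV A H0 E" unfolding V_def IV_def by auto
    next
      fix U assume "U \<in> IV A H0 E"
      then show "U \<in> X (vec.dim B)" unfolding X_def V_def IV_def using H0 by auto
    qed
    moreover have "cob f (IV A H0 E)"
    proof (cases "M < vec.dim H0")
      case True
      have lt: "vec.dim H0 < vec.dim B" using H0 MB by simp
      show ?thesis
      proof (rule less.hyps[OF lt H0(1) H0(2)])
        show "\<forall>e\<in>E. vec.dim A < e \<and> e < vec.dim H0" using bd leM True by fastforce
        have "IV A H0 E \<subseteq> IV A B E" unfolding IV_def using H0 by auto
        then show "AS f (IV A H0 E)" "CC f (IV A H0 E)" using as cc AS_mono CC_mono by blast+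
      qed
    next
      case False
      then have "M = vec.dim H0" using MB H0 by simp
      then have H0I: "H0 \<in> IV A H0 E" unfolding IV_def using H0 ME by auto
      have sub: "IV A H0 E \<subseteq> IV A B E" unfolding IV_def using H0 by auto
      show ?thesis
      proof (rule cone[OF _ _ H0I])
        show "AS f (IV A H0 E)" "CC f (IV A H0 E)" using as cc AS_mono CC_mono sub by blast+
        show "\<forall>x\<in>IV A H0 E. x \<noteq> H0 \<longrightarrow> adj x H0" unfolding IV_def adj_def by auto
      qed
    qed
    ultimately show ?thesis by simp
  qed
  have step: "cob f (X e)" if e: "e < vec.dim B" and c: "cob f (X (Suc e))" for e
  proof -
    define Y where "Y = {U \<in> V. \<not> U \<subseteq> H0 \<and> vec.dim U = e}"
    have XY: "X e = X (Suc e) \<union> Y" unfolding X_def Y_def by auto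
    show ?thesis unfolding XY
    proof (rule glue)
      have sub: "X (Suc e) \<union> Y \<subseteq> IV A B E" using XV[of e] XY unfolding V_def by blast
      show "AS f (X (Suc e) \<union> Y)" using AS_mono[OF as sub] .
      show "CC f (X (Suc e) \<union> Y)" using CC_mono[OF cc sub] .
      show "X (Suc e) \<inter> Y = {}" unfolding X_def Y_def by auto
      show "\<forall>y\<in>Y. \<forall>y'\<in>Y. \<not> adj y y'"
      proof (intro ballI notI)
        fix y y' assume "y \<in> Y" "y' \<in> Y" "adj y y'"
        then show False using comp_eq[of y y'] unfolding Y_def V_def IV_def adj_def by auto
      qed
      show "\<forall>y\<in>Y. conn {x \<in> X (Suc e). adj x y}"
      proof
        fix y assume y: "y \<in> Y"
        have "conn {U \<in> {U \<in> IV A B E. U \<subseteq> H0 \<or> Suc (vec.dim y) \<le> vec.dim U}. adj U y}"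
          using NBR[OF A B H0(1) H0(2) H0(3) Bsp cE bd] y unfolding Y_def V_def by blast
        moreover have "vec.dim y = e" using y unfolding Y_def by auto
        ultimately show "conn {x \<in> X (Suc e). adj x y}" unfolding X_def V_def by simp
      qed
      show "cob f (X (Suc e))" by (rule c)
    qed
  qed
  have "\<forall>j. j \<le> vec.dim B \<longrightarrow> cob f (X (vec.dim B - j))"
  proof (intro allI)
    fix j show "j \<le> vec.dim B \<longrightarrow> cob f (X (vec.dim B - j))"
    proof (induction j)
      case 0 then show ?case using base by simp
    next
      case (Suc j)
      show ?case
      proof
        assume j: "Suc j \<le> vec.dim B"
        have "Suc (vec.dim B - Suc j) = vec.dim B - j" using j by simp
        then show "cob f (X (vec.dim B - Suc j))" using step[of "vec.dim B - Suc j"] Suc j by simp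
      qed
    qed
  qed
  then have "cob f (X (vec.dim B - vec.dim B))" by blast
  then have "cob f (X 0)" by simp
  moreover have "X 0 = V" unfolding X_def by auto
  ultimately show ?case unfolding V_def by simp
qed

definition chain :: "('a::field ^'n) set set \<Rightarrow> bool" where
  "chain s \<longleftrightarrow> (\<forall>A\<in>s. \<forall>B\<in>s. A \<subseteq> B \<or> B \<subseteq> A)"

definition VS :: "('a::field ^'n) set set \<Rightarrow> nat set \<Rightarrow> ('a ^'n) set set" where
  "VS s E = {W. vec.subspace W \<and> vec.dim W \<in> E \<and> (\<forall>A\<in>s. A \<subseteq> W \<or> W \<subseteq> A)}"

lemma chain_max:
  fixes C :: "'b set set"
  assumes "finite C" "C \<noteq> {}" "\<forall>A\<in>C. \<forall>B\<in>C. A \<subseteq> B \<or> B \<subseteq> A"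
  shows "\<exists>M\<in>C. \<forall>A\<in>C. A \<subseteq> M"
  using assms
proof (induction C rule: finite_ne_induct)
  case (singleton x) then show ?case by auto
next
  case (insert x F)
  then obtain M where M: "M \<in> F" "\<forall>A\<in>F. A \<subseteq> M" by auto
  have "x \<subseteq> M \<or> M \<subseteq> x" using bspec[OF bspec[OF insert.prems insertI1] insertI2[OF M(1)]] .
  then show ?case using M by blast
qed

lemma chain_min:
  fixes C :: "'b set set"
  assumes "finite C" "C \<noteq> {}" "\<forall>A\<in>C. \<forall>B\<in>C. A \<subseteq> B \<or> B \<subseteq> A"
  shows "\<exists>M\<in>C. \<forall>A\<in>C. M \<subseteq> A"
  using assms
proof (induction C rule: finite_ne_induct)
  case (singleton x) then show ?case by auto
next
  case (insert x F)
  then obtain M where M: "M \<in> F" "\<forall>A\<in>F. M \<subseteq> A" by auto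
  have "x \<subseteq> M \<or> M \<subseteq> x" using bspec[OF bspec[OF insert.prems insertI1] insertI2[OF M(1)]] .
  then show ?case
  proof
    assume xM: "x \<subseteq> M"
    have "\<forall>A\<in>insert x F. x \<subseteq> A"
    proof
      fix A assume "A \<in> insert x F"
      then consider "A = x" | "A \<in> F" by blast
      then show "x \<subseteq> A"
      proof cases
        case 1 then show ?thesis by simp
      next
        case 2 then have "M \<subseteq> A" using M(2) by blast
        then show ?thesis using order_trans[OF xM] by blast
      qed
    qed
    then show ?thesis by (intro bexI[of _ x]) auto
  next
    assume Mx: "M \<subseteq> x"
    have "\<forall>A\<in>insert x F. M \<subseteq> A" using Mx M(2) by simp
    then show ?thesis using M(1) by (intro bexI[of _ M]) auto
  qed
qed

lemma IR:
  fixes s :: "('a::field ^'n) set set"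
  assumes fs: "finite s" and ss: "\<forall>A\<in>s. vec.subspace A" and cs: "chain s"
    and fE: "finite E" and nE: "E \<noteq> {}" and bE: "\<forall>e\<in>E. 0 < e \<and> e < CARD('n)"
    and sep: "\<forall>A\<in>s. vec.dim A < Min E \<or> Max E < vec.dim A"
  shows "\<exists>A' B'. vec.subspace A' \<and> vec.subspace B' \<and> A' \<subseteq> B' \<and>
           (\<forall>e\<in>E. vec.dim A' < e \<and> e < vec.dim B') \<and> VS s E = IV A' B' E"
proof -
  define Lo where "Lo = {A\<in>s. vec.dim A < Min E}"
  define Hi where "Hi = {A\<in>s. Max E < vec.dim A}"
  have mE: "Min E \<in> E" "Max E \<in> E" using fE nE by auto
  have mm: "\<forall>e\<in>E. Min E \<le> e \<and> e \<le> Max E" using fE by auto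
  obtain A' where A': "vec.subspace A'" "vec.dim A' < Min E" "\<forall>A\<in>Lo. A \<subseteq> A'" "A' \<in> s \<or> A' = vec.span {}"
  proof (cases "Lo = {}")
    case True
    have "vec.dim (vec.span {}) = 0" by simp
    then show ?thesis using that[of "vec.span {}"] True bE mE by auto
  next
    case False
    obtain M where "M \<in> Lo" "\<forall>A\<in>Lo. A \<subseteq> M"
      using chain_max[of Lo] False fs cs unfolding Lo_def chain_def by auto
    then show ?thesis using that[of M] ss unfolding Lo_def by auto
  qed
  obtain B' where B': "vec.subspace B'" "Max E < vec.dim B'" "\<forall>A\<in>Hi. B' \<subseteq> A" "B' \<in> s \<or> B' = UNIV"
  proof (cases "Hi = {}")
    case True
    have "vec.dim (UNIV :: ('a ^'n) set) = CARD('n)" by (rule dim_univ)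
    then show ?thesis using that[of UNIV] True bE mE by (auto simp: vec.subspace_UNIV)
  next
    case False
    obtain M where "M \<in> Hi" "\<forall>A\<in>Hi. M \<subseteq> A"
      using chain_min[of Hi] False fs cs unfolding Hi_def chain_def by auto
    then show ?thesis using that[of M] ss unfolding Hi_def by auto
  qed
  have span0: "vec.span {} \<subseteq> W" if "vec.subspace W" for W :: "('a ^'n) set"
    using vec.span_minimal[of "{}" W] that by simp
  have A'W: "A' \<subseteq> W" if "vec.subspace W" "vec.dim W \<in> E" "\<forall>A\<in>s. A \<subseteq> W \<or> W \<subseteq> A" for W
  proof (cases "A' \<in> s")
    case True
    then show ?thesis using comp_lt[of A' W] that A' mm by fastforce
  next
    case False then show ?thesis using A' span0 that by auto
  qed
  have WB': "W \<subseteq> B'" if "vec.subspace W" "vec.dim W \<in> E" "\<forall>A\<in>s. A \<subseteq> W \<or> W \<subseteq> A" for W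
  proof (cases "B' \<in> s")
    case True
    then show ?thesis using comp_lt[of W B'] that B' mm by fastforce
  next
    case False then show ?thesis using B' by auto
  qed
  have AB: "A' \<subseteq> B'"
  proof (cases "A' \<in> s")
    case True
    show ?thesis
    proof (cases "B' \<in> s")
      case True
      have c: "A' \<subseteq> B' \<or> B' \<subseteq> A'" using bspec[OF bspec[OF cs[unfolded chain_def] \<open>A' \<in> s\<close>] True] .
      have "Min E \<le> Max E" using mm mE by blast
      then have "vec.dim A' < vec.dim B'" using A'(2) B'(2) by linarith
      then show ?thesis using comp_lt[OF c] by blast
    next
      case False then show ?thesis using B' by auto
    qed
  next
    case False then show ?thesis using A' B' span0 by auto
  qed
  have eq: "VS s E = IV A' B' E"
  proof (intro equalityI subsetI)
    fix W assume "W \<in> VS s E"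
    then show "W \<in> IV A' B' E" unfolding VS_def IV_def using A'W WB' by auto
  next
    fix W assume W: "W \<in> IV A' B' E"
    have "\<forall>A\<in>s. A \<subseteq> W \<or> W \<subseteq> A"
    proof
      fix A assume A: "A \<in> s"
      show "A \<subseteq> W \<or> W \<subseteq> A"
      proof (cases "vec.dim A < Min E")
        case True
        then have "A \<subseteq> A'" using A' A unfolding Lo_def by auto
        then show ?thesis using W unfolding IV_def by auto
      next
        case False
        then have "A \<in> Hi" using sep A unfolding Hi_def by auto
        then have "B' \<subseteq> A" using B' by auto
        then show ?thesis using W unfolding IV_def by auto
      qed
    qed
    then show "W \<in> VS s E" using W unfolding VS_def IV_def by auto
  qed
  show ?thesis
    apply (rule exI[of _ A'], rule exI[of _ B'])
    using A' B' AB eq mm by fastforce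
qed

lemma NE_chain:
  fixes s :: "('a::field ^'n) set set"
  assumes fs: "finite s" and ss: "\<forall>A\<in>s. vec.subspace A" and cs: "chain s"
    and e: "e \<notin> vec.dim ` s" "0 < e" "e < CARD('n)"
  shows "VS s {e} \<noteq> {}"
proof -
  have "\<forall>A\<in>s. vec.dim A < Min {e} \<or> Max {e} < vec.dim A" using e by force
  then obtain A' B' where AB: "vec.subspace A'" "vec.subspace B'" "A' \<subseteq> B'"
    "\<forall>e'\<in>{e}. vec.dim A' < e' \<and> e' < vec.dim B'" "VS s {e} = IV A' B' {e}"
    using IR[OF fs ss cs, of "{e}"] e by auto
  obtain W where "vec.subspace W" "A' \<subseteq> W" "W \<subseteq> B'" "vec.dim W = e"
    using exist_mid[OF AB(1,2,3), of e] AB(4) by auto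
  then have "W \<in> IV A' B' {e}" unfolding IV_def by auto
  then show ?thesis using AB(5) by auto
qed

lemma VS_mono: "E1 \<subseteq> E2 \<Longrightarrow> VS s E1 \<subseteq> VS s E2" unfolding VS_def by auto

lemma split_facts:
  fixes s :: "('a::field ^'n) set set"
  assumes fs: "finite s" and ss: "\<forall>A\<in>s. vec.subspace A" and cs: "chain s"
    and bE: "\<forall>e\<in>E. 0 < e \<and> e < CARD('n)" and dj: "E \<inter> vec.dim ` s = {}"
    and A: "A \<in> s" and e1: "e1 \<in> E" "e1 < vec.dim A" and e2: "e2 \<in> E" "vec.dim A < e2"
  shows "VS s E = VS s {e\<in>E. e < vec.dim A} \<union> VS s {e\<in>E. vec.dim A < e}"
    and "VS s {e\<in>E. e < vec.dim A} \<noteq> {}" and "VS s {e\<in>E. vec.dim A < e} \<noteq> {}"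
    and "\<forall>x\<in>VS s {e\<in>E. e < vec.dim A}. \<forall>y\<in>VS s {e\<in>E. vec.dim A < e}. adj x y"
proof -
  show "VS s E = VS s {e\<in>E. e < vec.dim A} \<union> VS s {e\<in>E. vec.dim A < e}"
  proof (intro equalityI subsetI)
    fix W assume W: "W \<in> VS s E"
    have "vec.dim W \<noteq> vec.dim A" using W dj A unfolding VS_def by auto
    then show "W \<in> VS s {e\<in>E. e < vec.dim A} \<union> VS s {e\<in>E. vec.dim A < e}"
      using W unfolding VS_def by auto
  next
    fix W assume "W \<in> VS s {e\<in>E. e < vec.dim A} \<union> VS s {e\<in>E. vec.dim A < e}"
    then show "W \<in> VS s E" unfolding VS_def by auto
  qed
  have "VS s {e1} \<noteq> {}" using NE_chain[OF fs ss cs, of e1] e1 dj bE by auto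
  moreover have "VS s {e1} \<subseteq> VS s {e\<in>E. e < vec.dim A}" using e1 by (intro VS_mono) auto
  ultimately show "VS s {e\<in>E. e < vec.dim A} \<noteq> {}" by blast
  have "VS s {e2} \<noteq> {}" using NE_chain[OF fs ss cs, of e2] e2 dj bE by auto
  moreover have "VS s {e2} \<subseteq> VS s {e\<in>E. vec.dim A < e}" using e2 by (intro VS_mono) auto
  ultimately show "VS s {e\<in>E. vec.dim A < e} \<noteq> {}" by blast
  show "\<forall>x\<in>VS s {e\<in>E. e < vec.dim A}. \<forall>y\<in>VS s {e\<in>E. vec.dim A < e}. adj x y"
  proof (intro ballI)
    fix x y assume x: "x \<in> VS s {e\<in>E. e < vec.dim A}" and y: "y \<in> VS s {e\<in>E. vec.dim A < e}"
    have "x \<subseteq> A" using comp_lt[of x A] x A unfolding VS_def by auto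
    moreover have "A \<subseteq> y" using comp_lt[of A y] y A unfolding VS_def by auto
    moreover have "x \<noteq> y" using x y unfolding VS_def by auto
    ultimately show "adj x y" unfolding adj_def by auto
  qed
qed

lemma CONN_chain:
  fixes s :: "('a::field ^'n) set set"
  assumes fs: "finite s" and ss: "\<forall>A\<in>s. vec.subspace A" and cs: "chain s"
    and cE: "2 \<le> card E" and bE: "\<forall>e\<in>E. 0 < e \<and> e < CARD('n)" and dj: "E \<inter> vec.dim ` s = {}"
  shows "conn (VS s E)"
proof -
  have fE: "finite E" "E \<noteq> {}" using cE by (auto intro: card_ge_0_finite)
  have mE: "Min E \<in> E" "Max E \<in> E" using fE by auto
  show ?thesis
  proof (cases "\<exists>A\<in>s. Min E < vec.dim A \<and> vec.dim A < Max E")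
    case True
    then obtain A where A: "A \<in> s" "Min E < vec.dim A" "vec.dim A < Max E" by auto
    note sf = split_facts[OF fs ss cs bE dj A(1) mE(1) A(2) mE(2) A(3)]
    show ?thesis unfolding sf(1) using conn_join sf(2-4) by blast
  next
    case False
    have "\<forall>A\<in>s. vec.dim A < Min E \<or> Max E < vec.dim A"
    proof
      fix A assume A: "A \<in> s"
      have "vec.dim A \<notin> E" using dj A by blast
      then have "vec.dim A \<noteq> Min E" "vec.dim A \<noteq> Max E" using mE by auto
      then show "vec.dim A < Min E \<or> Max E < vec.dim A" using False A by auto
    qed
    then obtain A' B' where AB: "vec.subspace A'" "vec.subspace B'" "A' \<subseteq> B'"
      "\<forall>e\<in>E. vec.dim A' < e \<and> e < vec.dim B'" "VS s E = IV A' B' E"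
      using IR[OF fs ss cs fE bE] by blast
    show ?thesis unfolding AB(5) using IC[OF AB(1,2,3) cE AB(4)] .
  qed
qed

lemma H1_chain:
  fixes s :: "('a::field ^'n) set set"
  assumes fs: "finite s" and ss: "\<forall>A\<in>s. vec.subspace A" and cs: "chain s"
    and cE: "3 \<le> card E" and bE: "\<forall>e\<in>E. 0 < e \<and> e < CARD('n)" and dj: "E \<inter> vec.dim ` s = {}"
    and as: "AS f (VS s E)" and cc: "CC f (VS s E)"
  shows "cob f (VS s E)"
proof -
  have fE: "finite E" "E \<noteq> {}" using cE by (auto intro: card_ge_0_finite)
  have mE: "Min E \<in> E" "Max E \<in> E" using fE by auto
  show ?thesis
  proof (cases "\<exists>A\<in>s. Min E < vec.dim A \<and> vec.dim A < Max E")
    case True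
    then obtain A where A: "A \<in> s" "Min E < vec.dim A" "vec.dim A < Max E" by auto
    note sf = split_facts[OF fs ss cs bE dj A(1) mE(1) A(2) mE(2) A(3)]
    define E1 where "E1 = {e\<in>E. e < vec.dim A}"
    define E2 where "E2 = {e\<in>E. vec.dim A < e}"
    have "E1 \<union> E2 \<subseteq> E" "E1 \<inter> E2 = {}" unfolding E1_def E2_def by auto
    have "vec.dim A \<notin> E" using dj A(1) by blast
    then have "E = E1 \<union> E2" unfolding E1_def E2_def
    proof (intro equalityI subsetI)
      fix x assume dA: "vec.dim A \<notin> E" and x: "x \<in> E"
      then have "x \<noteq> vec.dim A" by blast
      then have "x < vec.dim A \<or> vec.dim A < x" by linarith
      then show "x \<in> {e \<in> E. e < vec.dim A} \<union> {e \<in> E. vec.dim A < e}" using x by blast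
    qed auto
    moreover have fin: "finite E1" "finite E2" using fE unfolding E1_def E2_def by auto
    ultimately have "card E1 + card E2 = card E" using card_Un_disjoint[OF fin \<open>E1 \<inter> E2 = {}\<close>] by simp
    then have "2 \<le> card E1 \<or> 2 \<le> card E2" using cE by linarith
    then show ?thesis
    proof
      assume c1: "2 \<le> card E1"
      have cn: "conn (VS s E1)" using CONN_chain[OF fs ss cs c1] bE dj unfolding E1_def by auto
      obtain x0 where x0: "x0 \<in> VS s E2" using sf(3) unfolding E2_def by auto
      obtain y0 where y0: "y0 \<in> VS s E1" using sf(2) unfolding E1_def by auto
      have eq: "VS s E = VS s E2 \<union> VS s E1" using sf(1) unfolding E1_def E2_def by auto
      have "\<forall>x\<in>VS s E2. \<forall>y\<in>VS s E1. adj x y" using sf(4) adj_sym unfolding E1_def E2_def by blast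
      moreover have "VS s E2 \<inter> VS s E1 = {}" unfolding VS_def E1_def E2_def by auto
      ultimately show ?thesis unfolding eq using join[of f "VS s E2" "VS s E1" x0 y0] as cc eq cn x0 y0 by auto
    next
      assume c2: "2 \<le> card E2"
      have cn: "conn (VS s E2)" using CONN_chain[OF fs ss cs c2] bE dj unfolding E2_def by auto
      obtain x0 where x0: "x0 \<in> VS s E1" using sf(2) unfolding E1_def by auto
      obtain y0 where y0: "y0 \<in> VS s E2" using sf(3) unfolding E2_def by auto
      have eq: "VS s E = VS s E1 \<union> VS s E2" using sf(1) unfolding E1_def E2_def by auto
      have "\<forall>x\<in>VS s E1. \<forall>y\<in>VS s E2. adj x y" using sf(4) unfolding E1_def E2_def by blast
      moreover have "VS s E1 \<inter> VS s E2 = {}" unfolding VS_def E1_def E2_def by auto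
      ultimately show ?thesis unfolding eq using join[of f "VS s E1" "VS s E2" x0 y0] as cc eq cn x0 y0 by auto
    qed
  next
    case False
    have "\<forall>A\<in>s. vec.dim A < Min E \<or> Max E < vec.dim A"
    proof
      fix A assume A: "A \<in> s"
      have "vec.dim A \<notin> E" using dj A by blast
      then have "vec.dim A \<noteq> Min E" "vec.dim A \<noteq> Max E" using mE by auto
      then show "vec.dim A < Min E \<or> Max E < vec.dim A" using False A by auto
    qed
    then obtain A' B' where AB: "vec.subspace A'" "vec.subspace B'" "A' \<subseteq> B'"
      "\<forall>e\<in>E. vec.dim A' < e \<and> e < vec.dim B'" "VS s E = IV A' B' E"
      using IR[OF fs ss cs fE bE] by blast
    show ?thesis unfolding AB(5) using IH1[OF AB(1) cE AB(2,3,4)] as cc AB(5) by simp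
  qed
qed

lemma inj_chain:
  fixes t :: "('a::field ^'n) set set"
  assumes "\<forall>W\<in>t. vec.subspace W" "chain t"
  shows "inj_on vec.dim t"
  unfolding inj_on_def
proof (intro ballI impI)
  fix x y assume "x \<in> t" "y \<in> t" "vec.dim x = vec.dim y"
  then show "x = y" using assms comp_eq[of x y] unfolding chain_def by blast
qed

lemma EXT:
  fixes t :: "('a::field ^'n) set set"
  assumes S: "S \<subseteq> {1..CARD('n) - 1}"
  shows "(\<forall>W\<in>t. vec.subspace W) \<and> vec.dim ` t \<subseteq> S \<and> chain t \<Longrightarrow> \<exists>F. top_face S F \<and> t \<subseteq> F"
proof (induction "card (S - vec.dim ` t)" arbitrary: t rule: less_induct)
  case less
  have fS: "finite S" using S finite_subset by blast
  have st: "\<forall>W\<in>t. vec.subspace W" "vec.dim ` t \<subseteq> S" "chain t" using less.prems by auto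
  have inj: "inj_on vec.dim t" using inj_chain st by blast
  have "finite (vec.dim ` t)" using st fS finite_subset by blast
  then have ft: "finite t" using finite_imageD inj by blast
  show ?case
  proof (cases "S - vec.dim ` t = {}")
    case True
    then have "vec.dim ` t = S" using st by auto
    then have "top_face S t" unfolding top_face_def bij_betw_def using st inj unfolding chain_def by auto
    then show ?thesis by blast
  next
    case False
    then obtain e where e: "e \<in> S" "e \<notin> vec.dim ` t" by auto
    have "e \<in> {1..CARD('n) - 1}" using e S by blast
    then have eb: "0 < e" "e < CARD('n)" by auto
    obtain W where W: "W \<in> VS t {e}" using NE_chain[OF ft st(1) st(3) e(2) eb] by auto
    then have sW: "vec.subspace W" "vec.dim W = e" "\<forall>A\<in>t. A \<subseteq> W \<or> W \<subseteq> A" unfolding VS_def by auto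
    let ?t = "insert W t"
    have st': "(\<forall>W\<in>?t. vec.subspace W) \<and> vec.dim ` ?t \<subseteq> S \<and> chain ?t"
      using st sW e unfolding chain_def by auto
    have eqq: "S - vec.dim ` ?t = (S - vec.dim ` t) - {e}" using sW by auto
    have em: "e \<in> S - vec.dim ` t" using e by blast
    have fi: "finite (S - vec.dim ` t)" using fS by blast
    have "card ((S - vec.dim ` t) - {e}) < card (S - vec.dim ` t)" by (rule card_Diff1_less[OF fi em])
    then have lt: "card (S - vec.dim ` ?t) < card (S - vec.dim ` t)" unfolding eqq .
    have "\<exists>F. top_face S F \<and> ?t \<subseteq> F" using less.hyps[OF lt st'] .
    then show ?thesis
    proof (rule exE)
      fix F assume F: "top_face S F \<and> ?t \<subseteq> F"
      then have "t \<subseteq> F" by simp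
      then show ?thesis using F by (intro exI[of _ F] conjI) auto
    qed
  qed
qed

lemma top_face_props:
  fixes F :: "('a::field ^'n) set set"
  assumes "top_face S F"
  shows "\<forall>W\<in>F. vec.subspace W" "inj_on vec.dim F" "vec.dim ` F = S" "chain F"
  using assms unfolding top_face_def bij_betw_def chain_def by auto

lemma face_props:
  fixes t :: "('a::field ^'n) set set"
  assumes "face S t"
  shows "\<forall>W\<in>t. vec.subspace W" "vec.dim ` t \<subseteq> S" "chain t"
proof -
  obtain F where F: "top_face S F" "t \<subseteq> F" using assms unfolding face_def by blast
  note P = top_face_props[OF F(1)]
  show "\<forall>W\<in>t. vec.subspace W" using P(1) F(2) by blast
  show "vec.dim ` t \<subseteq> S" using P(3) F(2) by blast
  show "chain t" using P(4) F(2) unfolding chain_def by blast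
qed

lemma add_face:
  fixes s :: "('a::field ^'n) set set"
  assumes S: "S \<subseteq> {1..CARD('n) - 1}" and fc: "face S s"
    and T: "T \<subseteq> VS s (S - vec.dim ` s)" and cT: "chain T"
  shows "T \<in> link S s"
proof -
  have ps: "\<forall>W\<in>s. vec.subspace W" "vec.dim ` s \<subseteq> S" "chain s" using face_props[OF fc] by auto
  let ?t = "s \<union> T"
  have TV: "\<forall>W\<in>T. vec.subspace W \<and> vec.dim W \<in> S \<and> (\<forall>A\<in>s. A \<subseteq> W \<or> W \<subseteq> A)"
    using T unfolding VS_def by blast
  have c1: "\<forall>W\<in>?t. vec.subspace W" using ps(1) TV by blast
  have c2: "vec.dim ` ?t \<subseteq> S" using ps(2) TV by blast
  have c3: "chain ?t" unfolding chain_def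
  proof (intro ballI)
    fix A B assume "A \<in> ?t" "B \<in> ?t"
    then consider "A \<in> s" "B \<in> s" | "A \<in> s" "B \<in> T" | "A \<in> T" "B \<in> s" | "A \<in> T" "B \<in> T" by blast
    then show "A \<subseteq> B \<or> B \<subseteq> A"
    proof cases
      case 1 then show ?thesis using ps(3) unfolding chain_def by blast
    next
      case 2 then show ?thesis using TV by blast
    next
      case 3 then show ?thesis using TV by blast
    next
      case 4 then show ?thesis using cT unfolding chain_def by blast
    qed
  qed
  have "(\<forall>W\<in>?t. vec.subspace W) \<and> vec.dim ` ?t \<subseteq> S \<and> chain ?t" by (rule conjI[OF c1 conjI[OF c2 c3]])
  then have "\<exists>F. top_face S F \<and> ?t \<subseteq> F" by (rule EXT[OF S])
  then have "face S ?t" unfolding face_def .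
  moreover have "?t - s = T" using T unfolding VS_def by force
  ultimately show ?thesis unfolding link_def by blast
qed

lemma edge_in:
  fixes s :: "('a::field ^'n) set set"
  assumes "link_edge S s u v"
  shows "u \<in> VS s (S - vec.dim ` s) \<and> v \<in> VS s (S - vec.dim ` s) \<and> adj u v"
proof -
  obtain t where t: "face S t" "s \<subseteq> t" "{u, v} = t - s" "u \<noteq> v"
    using assms unfolding link_edge_def link_def by blast
  obtain F where F: "top_face S F" "t \<subseteq> F" using t unfolding face_def by blast
  note P = top_face_props[OF F(1)]
  have inF: "x \<in> VS s (S - vec.dim ` s)" if x: "x \<in> {u, v}" for x
  proof -
    have xF: "x \<in> F" "x \<notin> s" using x t F by auto
    have "vec.dim x \<notin> vec.dim ` s"
    proof
      assume "vec.dim x \<in> vec.dim ` s"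
      then obtain A where "A \<in> s" "vec.dim x = vec.dim A" by auto
      then have "x = A" using P(2) xF t F unfolding inj_on_def by blast
      then show False using xF \<open>A \<in> s\<close> by simp
    qed
    then show ?thesis unfolding VS_def using P xF t F unfolding chain_def by blast
  qed
  have uvF: "u \<in> F" "v \<in> F" using t F by auto
  have "u \<subseteq> v \<or> v \<subseteq> u" using bspec[OF bspec[OF P(4)[unfolded chain_def] uvF(1)] uvF(2)] .
  then show ?thesis using inF t unfolding adj_def by auto
qed

theorem lemma3p3:
  fixes S :: "nat set" and s :: "('k::{finite, field} ^ 'n) set set"
    and f :: "('k ^ 'n) set \<Rightarrow> ('k ^ 'n) set \<Rightarrow> 'g::group_add"
  assumes "CARD('n) \<ge> 3"
    and "S \<subseteq> {1..CARD('n) - 1}" and "card S \<ge> 2"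
    and "face S s" and "card s + 3 \<le> card S"
    and "cochain1 S s f" and "cocycle1 S s f"
  shows "coboundary1 S s f"
proof -
  note S = assms(2) and fc = assms(4)
  define E where "E = S - vec.dim ` s"
  have fS: "finite S" using S finite_subset by blast
  have ps: "\<forall>W\<in>s. vec.subspace W" "vec.dim ` s \<subseteq> S" "chain s" using face_props[OF fc] by auto
  have inj: "inj_on vec.dim s" using inj_chain ps by blast
  have "finite (vec.dim ` s)" using ps fS finite_subset by blast
  then have fs: "finite s" using finite_imageD inj by blast
  have "card E = card S - card s" unfolding E_def using card_Diff_subset[OF finite_imageI[OF fs] ps(2)]
    card_image[OF inj] by simp
  then have cE: "3 \<le> card E" using assms(5) by simp
  have bE: "\<forall>e\<in>E. 0 < e \<and> e < CARD('n)" unfolding E_def using S assms(1) by force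
  have dj: "E \<inter> vec.dim ` s = {}" unfolding E_def by auto
  have as: "AS f (VS s E)" unfolding AS_def
  proof (intro ballI impI)
    fix u v assume uv: "u \<in> VS s E" "v \<in> VS s E" "adj u v"
    have "{u, v} \<in> link S s"
      by (rule add_face[OF S fc]) (use uv in \<open>auto simp: E_def chain_def adj_def\<close>)
    then have "link_edge S s u v" using uv unfolding link_edge_def adj_def by auto
    then show "f u v = - f v u" using assms(6) unfolding cochain1_def by blast
  qed
  have cc: "CC f (VS s E)" unfolding CC_def
  proof (intro ballI impI)
    fix u v w assume uvw: "u \<in> VS s E" "v \<in> VS s E" "w \<in> VS s E" "adj u v" "adj v w" "adj u w"
    have "{u, v, w} \<in> link S s"
      by (rule add_face[OF S fc]) (use uvw in \<open>auto simp: E_def chain_def adj_def\<close>)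
    then have "link_triangle S s u v w" using uvw unfolding link_triangle_def adj_def by auto
    then show "f u v + f v w + f w u = 0" using assms(7) unfolding cocycle1_def by blast
  qed
  have "cob f (VS s E)" using H1_chain[OF fs ps(1) ps(3) cE bE dj as cc] .
  then obtain g where g: "\<forall>u\<in>VS s E. \<forall>v\<in>VS s E. adj u v \<longrightarrow> f u v = g u + - g v"
    unfolding cob_def by blast
  show ?thesis unfolding coboundary1_def
  proof (intro exI allI impI)
    fix u v assume "link_edge S s u v"
    then show "f u v = g u + - g v" using edge_in g unfolding E_def by blast
  qed
qed

end
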